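(* Let $b\in\mathfrak{lie}_C$. Then $b$ is a push-invariant polynomial (i.e. $push(b)=b$) if and only if the mould $ma(b)$ is push-invariant.
   Context: $\mathfrak{lie}_C$ is the completed free Lie algebra over $\mathbb{Q}$ on $C_i=\mathrm{ad}(x)^{i-1}(y)$, $i\ge1$, inside $\mathbb{Q}\langle\langle x,y\rangle\rangle$; every element of $\mathfrak{lie}_C$ is uniquely a noncommutative series in the $C_i$. The push operator on words in $x,y$ is $push(x^{a_0}yx^{a_1}y\cdots yx^{a_r})=x^{a_r}yx^{a_0}y\cdots yx^{a_{r-1}}$, trivial on constants and powers of $x$, extended linearly. A mould is a family $A=(A^r)_{r\ge0}$ with $A^r$ a rational function in $u_1,\dots,u_r$; $ma$ sends a series $\sum k_{\underline a}C_{a_1}\cdots C_{a_r}$ (summed over all $r$) to the mould whose depth-$r$ component is $\sum k_{\underline a}u_1^{a_1-1}\cdots u_r^{a_r-1}$. A mould $A$ is push-invariant if $A(u_0,u_1,\dots,u_{r-1})=A(u_1,\dots,u_r)$ for all $r\ge1$, where $u_0=-u_1-\dots-u_r$. *)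

theory Defs
  imports Complex_Main
begin

datatype letter = X | Y

type_synonym word = "letter list"
type_synonym series = "word \<Rightarrow> rat"   \<comment> \<open>element of Q<<x,y>>: coefficient of each word\<close>

definition ser_zero :: series where "ser_zero = (\<lambda>_. 0)"
definition ser_one :: series where "ser_one = (\<lambda>w. if w = [] then 1 else 0)"
definition ser_letter :: "letter \<Rightarrow> series" where
  "ser_letter l = (\<lambda>w. if w = [l] then 1 else 0)"
definition ser_add :: "series \<Rightarrow> series \<Rightarrow> series" where
  "ser_add f g = (\<lambda>w. f w + g w)"
definition ser_scale :: "rat \<Rightarrow> series \<Rightarrow> series" where
  "ser_scale c f = (\<lambda>w. c * f w)"
definition ser_mult :: "series \<Rightarrow> series \<Rightarrow> series" where
  "ser_mult f g = (\<lambda>w. \<Sum>i\<le>length w. f (take i w) * g (drop i w))"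
definition bracket :: "series \<Rightarrow> series \<Rightarrow> series" where
  "bracket a b = (\<lambda>w. ser_mult a b w - ser_mult b a w)"

definition hom :: "nat \<Rightarrow> series \<Rightarrow> series" where
  "hom n f = (\<lambda>w. if length w = n then f w else 0)"

primrec adxy :: "nat \<Rightarrow> series" where
  "adxy 0 = ser_letter Y"
| "adxy (Suc n) = bracket (ser_letter X) (adxy n)"

definition C :: "nat \<Rightarrow> series" where
  "C i = adxy (i - 1)"   \<comment> \<open>only used for i \<ge> 1\<close>

inductive_set lie_poly :: "series set" where
  gen: "1 \<le> i \<Longrightarrow> C i \<in> lie_poly"
| zero: "ser_zero \<in> lie_poly"
| add: "a \<in> lie_poly \<Longrightarrow> b \<in> lie_poly \<Longrightarrow> ser_add a b \<in> lie_poly"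
| scale: "a \<in> lie_poly \<Longrightarrow> ser_scale c a \<in> lie_poly"
| brk: "a \<in> lie_poly \<Longrightarrow> b \<in> lie_poly \<Longrightarrow> bracket a b \<in> lie_poly"

text \<open>The completed free Lie algebra lie_C: series all of whose homogeneous components
  lie in the (graded) Lie algebra generated by the homogeneous C_i.\<close>
definition lie_C :: "series set" where
  "lie_C = {b. \<forall>n. hom n b \<in> lie_poly}"

definition Cprod :: "nat list \<Rightarrow> series" where
  "Cprod as = foldr ser_mult (map C as) ser_one"

definition compositions :: "nat \<Rightarrow> nat list set" where
  "compositions n = {as. (\<forall>a\<in>set as. 1 \<le> a) \<and> sum_list as = n}"

text \<open>The series sum_a k_a C_{a_1}...C_{a_r}; C_{a_1}...C_{a_r} is homogeneous of degree
  a_1+...+a_r, so each coefficient is a finite sum.\<close>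
definition series_of_coeffs :: "(nat list \<Rightarrow> rat) \<Rightarrow> series" where
  "series_of_coeffs k = (\<lambda>w. \<Sum>as\<in>compositions (length w). k as * Cprod as w)"

definition valid_coeffs :: "(nat list \<Rightarrow> rat) \<Rightarrow> bool" where
  "valid_coeffs k \<longleftrightarrow> (\<forall>as. (\<exists>a\<in>set as. a = 0) \<longrightarrow> k as = 0)"

definition C_coeffs :: "series \<Rightarrow> nat list \<Rightarrow> rat" where
  "C_coeffs b = (THE k. valid_coeffs k \<and> series_of_coeffs k = b)"

text \<open>A mould whose depth-r component is a formal power series in commuting u_1..u_r:
  A r e is the coefficient of u_1^(e_1)...u_r^(e_r) (for length e = r).\<close>
type_synonym mould = "nat \<Rightarrow> nat list \<Rightarrow> rat"

definition ma :: "series \<Rightarrow> mould" where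
  "ma b = (\<lambda>r e. if length e = r then C_coeffs b (map Suc e) else 0)"

definition hom_eval :: "mould \<Rightarrow> nat \<Rightarrow> nat \<Rightarrow> rat list \<Rightarrow> rat" where
  "hom_eval A r d u =
     (\<Sum>e\<in>{e. length e = r \<and> sum_list e = d}. A r e * (\<Prod>i<r. (u ! i) ^ (e ! i)))"

text \<open>Push-invariance A(u_0,u_1,...,u_{r-1}) = A(u_1,...,u_r), u_0 = -u_1-...-u_r,
  as an identity of power series, i.e. degree by degree.\<close>
definition push_invariant_mould :: "mould \<Rightarrow> bool" where
  "push_invariant_mould A \<longleftrightarrow>
     (\<forall>r\<ge>1. \<forall>d. \<forall>u::rat list. length u = r \<longrightarrow>
        hom_eval A r d ((- sum_list u) # butlast u) = hom_eval A r d u)"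

text \<open>push(x^a0 y x^a1 ... y x^ar) = x^ar y x^a0 y ... y x^a(r-1); identity on words without y.\<close>
definition push_word :: "word \<Rightarrow> word" where
  "push_word w =
     (if Y \<notin> set w then w
      else (let k = length (takeWhile (\<lambda>l. l = X) (rev w));
                w' = take (length w - k) w
            in replicate k X @ [Y] @ butlast w'))"

definition push_ser :: "series \<Rightarrow> series" where
  "push_ser f = (\<lambda>w. \<Sum>v\<in>{v. length v = length w \<and> push_word v = w}. f v)"

end

theory Submission
  imports Defs "HOL-Computational_Algebra.Polynomial"
begin


definition E :: "nat \<Rightarrow> nat \<Rightarrow> nat list set" where
  "E r d = {e. length e = r \<and> sum_list e = d}"

lemma E_finite: "finite (E r d)"
proof (rule finite_subset)
  show "E r d \<subseteq> {xs. set xs \<subseteq> {..d} \<and> length xs = r}"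
    by (auto simp: E_def member_le_sum_list)
  show "finite {xs. set xs \<subseteq> {..d} \<and> length xs = r}"
    by (rule finite_lists_length_eq) simp
qed

lemma E_0: "E 0 d = (if d = 0 then {[]} else {})"
  by (auto simp: E_def)

lemma E_Suc: "E (Suc r) d = (\<lambda>(j,e'). j # e') ` (SIGMA j:{..d}. E r (d - j))"
  by (auto simp: E_def length_Suc_conv image_iff)

lemma sum_E_Suc:
  "(\<Sum>e\<in>E (Suc r) d. F e) = (\<Sum>j\<le>d. \<Sum>e'\<in>E r (d - j). F (j # e'))"
proof -
  have inj: "inj_on (\<lambda>(j,e'). j # e') (SIGMA j:{..d}. E r (d - j))"
    by (auto simp: inj_on_def)
  have "(\<Sum>e\<in>E (Suc r) d. F e) = (\<Sum>(j,e')\<in>(SIGMA j:{..d}. E r (d - j)). F (j # e'))"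
    unfolding E_Suc by (subst sum.reindex[OF inj]) (simp add: case_prod_unfold)
  also have "\<dots> = (\<Sum>j\<le>d. \<Sum>e'\<in>E r (d - j). F (j # e'))"
    by (rule sum.Sigma[symmetric]) (auto simp: E_finite)
  finally show ?thesis .
qed

lemma univ_poly_zero:
  fixes q :: "nat \<Rightarrow> rat"
  assumes "\<forall>a. (\<Sum>j\<le>d. a ^ j * q j) = 0" and "j \<le> d"
  shows "q j = 0"
proof -
  let ?p = "\<Sum>i\<le>d. monom (q i) i"
  have "\<forall>a. poly ?p a = 0"
    using assms(1) by (simp add: poly_sum poly_monom mult.commute)
  then have "?p = 0" by (simp add: poly_all_0_iff_0)
  then have "coeff ?p j = 0" by simp
  then show ?thesis using assms(2) by (simp add: coeff_sum coeff_monom)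
qed

lemma L:
  assumes "\<forall>u::rat list. length u = r \<longrightarrow> (\<Sum>e\<in>E r d. c e * (\<Prod>i<r. (u!i)^(e!i))) = 0"
    and "e \<in> E r d"
  shows "c e = 0"
  using assms
proof (induction r arbitrary: d c e)
  case 0
  then show ?case using "0.prems"(1)[rule_format, of "[]"] by (auto simp: E_0 split: if_splits)
next
  case (Suc r)
  from Suc.prems(2) obtain j e' where e: "e = j # e'" and j: "j \<le> d" and e': "e' \<in> E r (d - j)"
    unfolding E_Suc by force
  define Q where "Q u' j = (\<Sum>e'\<in>E r (d - j). c (j # e') * (\<Prod>i<r. (u'!i)^(e'!i)))" for u' j
  have Q0: "Q u' j = 0" if "length u' = r" "j \<le> d" for u' j
  proof (rule univ_poly_zero[where d = d, OF _ that(2)], rule allI)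
    fix a :: rat
    have "0 = (\<Sum>e\<in>E (Suc r) d. c e * (\<Prod>i<Suc r. ((a # u')!i)^(e!i)))"
      using Suc.prems(1)[rule_format, of "a # u'"] that by simp
    also have "\<dots> = (\<Sum>j\<le>d. \<Sum>e'\<in>E r (d - j). c (j # e') * (a ^ j * (\<Prod>i<r. (u'!i)^(e'!i))))"
      by (simp only: sum_E_Suc prod.lessThan_Suc_shift) simp
    also have "\<dots> = (\<Sum>j\<le>d. a ^ j * Q u' j)"
      by (simp add: Q_def sum_distrib_left algebra_simps)
    finally show "(\<Sum>j\<le>d. a ^ j * Q u' j) = 0" by simp
  qed
  have "c (j # e') = 0"
    by (rule Suc.IH[where d="d - j" and c="\<lambda>e'. c (j # e')" and e=e']) (use Q0 j e' in \<open>auto simp: Q_def\<close>)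
  then show ?case by (simp add: e)
qed



definition cY :: "word \<Rightarrow> nat" where "cY w = length (filter (\<lambda>l. l = Y) w)"

lemma cY_simps[simp]: "cY [] = 0" "cY (X # w) = cY w" "cY (Y # w) = Suc (cY w)"
  "cY (u @ v) = cY u + cY v" "cY (replicate a X) = 0"
  by (auto simp: cY_def)

lemma cY_le: "cY w \<le> length w"
  by (simp add: cY_def)

definition W :: "nat \<Rightarrow> nat \<Rightarrow> word set" where
  "W n r = {w. length w = n \<and> cY w = r}"

lemma W_finite: "finite (W n r)"
proof (rule finite_subset)
  show "W n r \<subseteq> {xs. set xs \<subseteq> {X,Y} \<and> length xs = n}"
    using letter.exhaust by (auto simp: W_def)
  show "finite {xs. set xs \<subseteq> {X,Y} \<and> length xs = n}"
    by (rule finite_lists_length_eq) simp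
qed

fun mon :: "word \<Rightarrow> (nat \<Rightarrow> rat) \<Rightarrow> rat" where
  "mon [] z = 1"
| "mon (X # w) z = z 0 * mon w z"
| "mon (Y # w) z = mon w (\<lambda>i. z (Suc i))"

lemma mon_append: "mon (u @ v) z = mon u z * mon v (\<lambda>i. z (i + cY u))"
proof (induction u arbitrary: z)
  case Nil then show ?case by simp
next
  case (Cons l u) then show ?case by (cases l) auto
qed

definition V :: "nat \<Rightarrow> nat \<Rightarrow> series \<Rightarrow> (nat \<Rightarrow> rat) \<Rightarrow> rat" where
  "V n r f z = (\<Sum>w\<in>W n r. f w * mon w z)"

lemma W_le: "w \<in> W n r \<Longrightarrow> r \<le> n"
  by (auto simp: W_def cY_le)

lemma V_empty: "n < r \<Longrightarrow> V n r f z = 0"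
proof -
  assume "n < r"
  then have "W n r = {}" using W_le by (meson equals0I leD)
  then show ?thesis by (simp add: V_def)
qed

lemma V_add: "V n r (\<lambda>w. f w + g w) z = V n r f z + V n r g z"
  by (simp add: V_def sum.distrib algebra_simps)
lemma V_diff: "V n r (\<lambda>w. f w - g w) z = V n r f z - V n r g z"
  by (simp add: V_def sum_subtractf algebra_simps)
lemma V_scale: "V n r (\<lambda>w. c * f w) z = c * V n r f z"
  by (simp add: V_def sum_distrib_left algebra_simps)
lemma V_zero: "V n r (\<lambda>w. 0) z = 0"
  by (simp add: V_def)

lemma split_bij:
  assumes "i \<le> n" "q \<le> r"
  shows "bij_betw (\<lambda>(u,v). u @ v) (W i q \<times> W (n - i) (r - q)) {w \<in> W n r. cY (take i w) = q}"
unfolding bij_betw_def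
proof
  show "inj_on (\<lambda>(u,v). u @ v) (W i q \<times> W (n - i) (r - q))"
    by (auto simp: inj_on_def W_def)
  show "(\<lambda>(u,v). u @ v) ` (W i q \<times> W (n - i) (r - q)) = {w \<in> W n r. cY (take i w) = q}"
  proof
    show "(\<lambda>(u,v). u @ v) ` (W i q \<times> W (n - i) (r - q)) \<subseteq> {w \<in> W n r. cY (take i w) = q}"
      using assms by (auto simp: W_def)
    show "{w \<in> W n r. cY (take i w) = q} \<subseteq> (\<lambda>(u,v). u @ v) ` (W i q \<times> W (n - i) (r - q))"
    proof
      fix w assume w: "w \<in> {w \<in> W n r. cY (take i w) = q}"
      have "cY w = cY (take i w) + cY (drop i w)"
        by (metis append_take_drop_id cY_simps(4))
      then show "w \<in> (\<lambda>(u,v). u @ v) ` (W i q \<times> W (n - i) (r - q))"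
        using w assms by (intro image_eqI[of _ _ "(take i w, drop i w)"]) (auto simp: W_def)
    qed
  qed
qed

lemma prod_formula:
  "V n r (ser_mult f g) z = (\<Sum>p\<le>n. \<Sum>q\<le>r. V p q f z * V (n - p) (r - q) g (\<lambda>i. z (i + q)))"
proof -
  have "V n r (ser_mult f g) z = (\<Sum>w\<in>W n r. \<Sum>i\<le>n. f (take i w) * g (drop i w) * mon w z)"
    by (simp add: V_def ser_mult_def W_def sum_distrib_right)
  also have "\<dots> = (\<Sum>i\<le>n. \<Sum>w\<in>W n r. f (take i w) * g (drop i w) * mon w z)"
    by (rule sum.swap)
  also have "\<dots> = (\<Sum>p\<le>n. \<Sum>q\<le>r. V p q f z * V (n - p) (r - q) g (\<lambda>i. z (i + q)))"
  proof (rule sum.cong[OF refl])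
    fix i assume i: "i \<in> {..n}"
    have "(\<Sum>w\<in>W n r. f (take i w) * g (drop i w) * mon w z)
        = (\<Sum>q\<le>r. \<Sum>w\<in>{w \<in> W n r. cY (take i w) = q}. f (take i w) * g (drop i w) * mon w z)"
    proof (rule sum.group[symmetric])
      show "finite (W n r)" by (rule W_finite)
      show "finite {..r}" by simp
      show "(\<lambda>w. cY (take i w)) ` W n r \<subseteq> {..r}"
      proof
        fix x assume "x \<in> (\<lambda>w. cY (take i w)) ` W n r"
        then obtain w where "w \<in> W n r" "x = cY (take i w)" by auto
        moreover have "cY w = cY (take i w) + cY (drop i w)"
          by (metis append_take_drop_id cY_simps(4))
        ultimately show "x \<in> {..r}" by (auto simp: W_def)
      qed
    qed
    also have "\<dots> = (\<Sum>q\<le>r. V i q f z * V (n - i) (r - q) g (\<lambda>j. z (j + q)))"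
    proof (rule sum.cong[OF refl])
      fix q assume q: "q \<in> {..r}"
      have "(\<Sum>w\<in>{w \<in> W n r. cY (take i w) = q}. f (take i w) * g (drop i w) * mon w z)
          = (\<Sum>x\<in>W i q \<times> W (n - i) (r - q). (\<lambda>w. f (take i w) * g (drop i w) * mon w z) ((\<lambda>(u,v). u @ v) x))"
        using sum.reindex_bij_betw[OF split_bij[of i n q r], of "\<lambda>w. f (take i w) * g (drop i w) * mon w z"] i q
        by simp
      also have "\<dots> = (\<Sum>(u,v)\<in>W i q \<times> W (n - i) (r - q). (f u * mon u z) * (g v * mon v (\<lambda>j. z (j + q))))"
        by (rule sum.cong[OF refl]) (auto simp: W_def mon_append)
      also have "\<dots> = V i q f z * V (n - i) (r - q) g (\<lambda>j. z (j + q))"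
        by (simp add: V_def sum_product sum.cartesian_product)
      finally show "(\<Sum>w\<in>{w \<in> W n r. cY (take i w) = q}. f (take i w) * g (drop i w) * mon w z)
          = V i q f z * V (n - i) (r - q) g (\<lambda>j. z (j + q))" .
    qed
    finally show "(\<Sum>w\<in>W n r. f (take i w) * g (drop i w) * mon w z) =
         (\<Sum>q\<le>r. V i q f z * V (n - i) (r - q) g (\<lambda>j. z (j + q)))" .
  qed
  finally show ?thesis .
qed



fun wd :: "nat list \<Rightarrow> word" where
  "wd [] = []"
| "wd [a] = replicate a X"
| "wd (a # b # cs) = replicate a X @ Y # wd (b # cs)"

fun exps :: "word \<Rightarrow> nat list" where
  "exps [] = [0]"
| "exps (X # w) = (case exps w of [] \<Rightarrow> [] | a # cs \<Rightarrow> Suc a # cs)"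
| "exps (Y # w) = 0 # exps w"

lemma exps_ne: "exps w \<noteq> []"
proof (induction w rule: exps.induct)
  case (2 w) then show ?case by (cases "exps w") auto
qed auto

lemma exps_len: "length (exps w) = Suc (cY w)"
proof (induction w rule: exps.induct)
  case (2 w) then show ?case by (cases "exps w") auto
qed auto

lemma exps_sum: "sum_list (exps w) = length w - cY w"
proof (induction w rule: exps.induct)
  case (2 w) then show ?case using exps_ne[of w] cY_le[of w] by (cases "exps w") auto
next
  case (3 w) then show ?case using cY_le[of w] by auto
qed auto

lemma wd_Suc: "wd (Suc a # cs) = X # wd (a # cs)"
  by (cases cs) auto

lemma wd_exps: "wd (exps w) = w"
proof (induction w rule: exps.induct)
  case (2 w) then show ?case using exps_ne[of w] by (cases "exps w") (auto simp: wd_Suc)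
next
  case (3 w) then show ?case using exps_ne[of w] by (cases "exps w") auto
qed auto

lemma exps_replicate_app: "exps (replicate a X @ v) = (case exps v of [] \<Rightarrow> [] | c # cs \<Rightarrow> (c + a) # cs)"
  by (induction a) (auto split: list.splits)

lemma exps_wd: "e \<noteq> [] \<Longrightarrow> exps (wd e) = e"
proof (induction e rule: wd.induct)
  case (2 a) then show ?case using exps_replicate_app[of a "[]"] by simp
next
  case (3 a b cs) then show ?case using exps_replicate_app[of a "Y # wd (b # cs)"] by simp
qed auto

lemma wd_len: "length (wd e) = sum_list e + (length e - 1)"
  by (induction e rule: wd.induct) auto

lemma wd_cY: "cY (wd e) = length e - 1"
  by (induction e rule: wd.induct) auto

lemma mon_replicate: "mon (replicate a X @ w) z = z 0 ^ a * mon w z"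
  by (induction a) auto

lemma mon_wd: "mon (wd e) z = (\<Prod>i<length e. z i ^ (e ! i))"
proof (induction e arbitrary: z rule: wd.induct)
  case (2 a) then show ?case using mon_replicate[of a "[]" z] by simp
next
  case (3 a b cs)
  show ?case
    using 3[of "\<lambda>i. z (Suc i)"]
    by (simp add: mon_replicate prod.lessThan_Suc_shift del: prod.lessThan_Suc)
qed auto

lemma wd_bij:
  assumes "r \<le> n"
  shows "bij_betw wd (E (Suc r) (n - r)) (W n r)"
  unfolding bij_betw_def
proof
  show "inj_on wd (E (Suc r) (n - r))"
  proof (rule inj_on_inverseI[where g = exps])
    fix x assume "x \<in> E (Suc r) (n - r)"
    then show "exps (wd x) = x" by (intro exps_wd) (auto simp: E_def)
  qed
  show "wd ` E (Suc r) (n - r) = W n r"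
  proof
    show "wd ` E (Suc r) (n - r) \<subseteq> W n r"
      using assms by (auto simp: E_def W_def wd_len wd_cY)
    show "W n r \<subseteq> wd ` E (Suc r) (n - r)"
    proof
      fix w assume "w \<in> W n r"
      then have "exps w \<in> E (Suc r) (n - r)"
        by (auto simp: E_def W_def exps_len exps_sum)
      then show "w \<in> wd ` E (Suc r) (n - r)"
        using wd_exps[of w] by (metis image_eqI)
    qed
  qed
qed

lemma V_E:
  assumes "r \<le> n"
  shows "V n r f z = (\<Sum>e\<in>E (Suc r) (n - r). f (wd e) * (\<Prod>i<Suc r. z i ^ (e ! i)))"
proof -
  have "V n r f z = (\<Sum>e\<in>E (Suc r) (n - r). f (wd e) * mon (wd e) z)"
    unfolding V_def using sum.reindex_bij_betw[OF wd_bij[OF assms], of "\<lambda>w. f w * mon w z"]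
    by simp
  also have "\<dots> = (\<Sum>e\<in>E (Suc r) (n - r). f (wd e) * (\<Prod>i<Suc r. z i ^ (e ! i)))"
    by (rule sum.cong[OF refl]) (auto simp: E_def mon_wd)
  finally show ?thesis .
qed

lemma Lw:
  assumes "\<forall>z. V n r f z = 0" and "w \<in> W n r"
  shows "f w = 0"
proof -
  have rn: "r \<le> n" using assms(2) by (rule W_le)
  have "(f \<circ> wd) (exps w) = 0"
  proof (rule L[where r = "Suc r" and d = "n - r"])
    show "\<forall>u::rat list. length u = Suc r \<longrightarrow>
        (\<Sum>e\<in>E (Suc r) (n - r). (f \<circ> wd) e * (\<Prod>i<Suc r. (u ! i) ^ (e ! i))) = 0"
      using assms(1) V_E[OF rn, of f] by auto
    show "exps w \<in> E (Suc r) (n - r)"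
      using assms(2) by (auto simp: E_def W_def exps_len exps_sum)
  qed
  then show ?thesis by (simp add: wd_exps)
qed

lemma series_eqI:
  assumes "\<And>n r z. V n r f z = V n r g z"
  shows "f = g"
proof
  fix w
  have "(\<lambda>w. f w - g w) w = 0"
    by (rule Lw[where n = "length w" and r = "cY w"]) (auto simp: V_diff assms W_def)
  then show "f w = g w" by simp
qed

section \<open>push\<close>

lemma wd_snoc: "cs \<noteq> [] \<Longrightarrow> wd (cs @ [a]) = wd cs @ Y # replicate a X"
proof (induction cs rule: wd.induct)
  case (3 a' b cs) then show ?case by (cases "b # cs @ [a]") auto
qed auto

lemma wd_Cons2: "cs \<noteq> [] \<Longrightarrow> wd (a # cs) = replicate a X @ Y # wd cs"
  by (cases cs) auto

lemma takeWhile_rep: "takeWhile (\<lambda>l. l = X) (replicate a X @ Y # w) = replicate a X"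
  by (induction a) auto

lemma push_wd: "cs \<noteq> [] \<Longrightarrow> push_word (wd (cs @ [a])) = wd (a # cs)"
  by (simp add: push_word_def wd_snoc wd_Cons2 takeWhile_rep Let_def)

definition rotz :: "nat \<Rightarrow> (nat \<Rightarrow> rat) \<Rightarrow> nat \<Rightarrow> rat" where
  "rotz r z i = (if i < r then z (Suc i) else if i = r then z 0 else z i)"

lemma push_facts:
  "length (push_word v) = length v \<and> cY (push_word v) = cY v \<and>
   mon (push_word v) z = mon v (rotz (cY v) z)"
proof (cases "Y \<in> set v")
  case False
  then have "cY v = 0" by (auto simp: cY_def filter_empty_conv)
  moreover have "rotz 0 z = z" by (auto simp: rotz_def)
  ultimately show ?thesis using False by (simp add: push_word_def)
next
  case True
  define e where "e = exps v"
  have v: "v = wd e" by (simp add: e_def wd_exps)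
  have "cY v \<noteq> 0" using True by (auto simp: cY_def filter_empty_conv)
  then have le: "length e = Suc (cY v)" "cY v \<ge> 1" by (auto simp: e_def exps_len)
  define cs where "cs = butlast e"
  define a where "a = last e"
  have ne: "e \<noteq> []" by (simp add: e_def exps_ne)
  have e: "e = cs @ [a]" using ne by (simp add: cs_def a_def)
  have lcs: "length cs = cY v" using le by (simp add: cs_def)
  have cs: "cs \<noteq> []" using lcs le by auto
  have pv: "push_word v = wd (a # cs)" using v e cs push_wd by simp
  obtain r where r: "cY v = r" by simp
  have m: "mon (push_word v) z = mon v (rotz (cY v) z)"
  proof -
    have "mon (push_word v) z = z 0 ^ a * (\<Prod>i<r. z (Suc i) ^ (cs ! i))"
      using lcs r by (simp add: pv mon_wd prod.lessThan_Suc_shift del: prod.lessThan_Suc)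
    also have "\<dots> = (\<Prod>i<r. rotz r z i ^ (e ! i)) * rotz r z r ^ (e ! r)"
    proof -
      have "(\<Prod>i<r. rotz r z i ^ (e ! i)) = (\<Prod>i<r. z (Suc i) ^ (cs ! i))"
        by (rule prod.cong[OF refl]) (use lcs r in \<open>simp add: e rotz_def nth_append\<close>)
      moreover have "rotz r z r ^ (e ! r) = z 0 ^ a"
        using lcs r by (simp add: e rotz_def nth_append)
      ultimately show ?thesis by simp
    qed
    also have "\<dots> = (\<Prod>i<Suc r. rotz r z i ^ (e ! i))" by simp
    also have "\<dots> = mon v (rotz r z)"
      using mon_wd[of e "rotz r z"] v le r by simp
    finally show ?thesis using r by simp
  qed
  show ?thesis using m pv v e by (simp add: wd_len wd_cY)
qed

lemma V_push: "V n r (push_ser f) z = V n r f (rotz r z)"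
proof -
  have set_eq: "{v. length v = length w \<and> push_word v = w} = {v \<in> W n r. push_word v = w}"
    if w: "w \<in> W n r" for w
  proof -
    have "v \<in> W n r" if "length v = length w" "push_word v = w" for v
      using w that push_facts[of v] by (auto simp: W_def)
    then show ?thesis using w by (auto simp: W_def)
  qed
  have "V n r (push_ser f) z = (\<Sum>w\<in>W n r. \<Sum>v\<in>{v \<in> W n r. push_word v = w}. f v * mon (push_word v) z)"
    unfolding V_def push_ser_def
    by (rule sum.cong[OF refl]) (simp add: set_eq sum_distrib_right)
  also have "\<dots> = (\<Sum>v\<in>W n r. f v * mon (push_word v) z)"
    by (rule sum.group[OF W_finite W_finite]) (auto simp: W_def push_facts)
  also have "\<dots> = V n r f (rotz r z)"
    unfolding V_def by (rule sum.cong[OF refl]) (auto simp: W_def push_facts)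
  finally show ?thesis .
qed



lemma V_letter: "V n r (ser_letter l) z = (if [l] \<in> W n r then mon [l] z else 0)"
proof -
  have "V n r (ser_letter l) z = (\<Sum>w\<in>W n r. if w = [l] then mon w z else 0)"
    unfolding V_def ser_letter_def by (rule sum.cong) auto
  also have "\<dots> = (if [l] \<in> W n r then mon [l] z else 0)"
    by (simp add: sum.delta[OF W_finite])
  finally show ?thesis .
qed

lemma V_X: "V n r (ser_letter X) z = (if n = 1 \<and> r = 0 then z 0 else 0)"
  by (auto simp: V_letter W_def)

lemma V_Y: "V n r (ser_letter Y) z = (if n = 1 \<and> r = 1 then 1 else 0)"
  by (auto simp: V_letter W_def)

lemma if_mult0: "(if P then x else 0) * y = (if P then x * y else (0::rat))"
  by simp

lemma dsum_delta:
  fixes Xv :: rat and n r a b :: nat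
  shows "(\<Sum>p\<le>n. \<Sum>q\<le>r. (if p = a \<and> q = b then Xv else 0) * Yf p q) = (if a \<le> n \<and> b \<le> r then Xv * Yf a b else 0)"
proof -
  have "(\<Sum>p\<le>n. \<Sum>q\<le>r. (if p = a \<and> q = b then Xv else 0) * Yf p q)
      = (\<Sum>p\<le>n. if p = a then (if b \<le> r then Xv * Yf a b else 0) else 0)"
  proof (rule sum.cong[OF refl])
    fix p
    show "(\<Sum>q\<le>r. (if p = a \<and> q = b then Xv else 0) * Yf p q) = (if p = a then (if b \<le> r then Xv * Yf a b else 0) else 0)"
    proof (cases "p = a")
      case True
      have "(\<Sum>q\<le>r. (if p = a \<and> q = b then Xv else 0) * Yf p q) = (\<Sum>q\<le>r. if q = b then Xv * Yf a b else 0)"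
        by (rule sum.cong[OF refl]) (simp add: True)
      also have "\<dots> = (if b \<le> r then Xv * Yf a b else 0)" by (simp add: sum.delta)
      finally show ?thesis using True by simp
    qed simp
  qed
  also have "\<dots> = (if a \<le> n \<and> b \<le> r then Xv * Yf a b else 0)"
    by (simp add: sum.delta)
  finally show ?thesis .
qed

lemma dsum_delta2:
  fixes Z :: "nat \<Rightarrow> rat" and n r :: nat
  shows   "(\<Sum>p\<le>n. \<Sum>q\<le>r. Yf p q * (if n - p = 1 \<and> r - q = 0 then Z q else 0)) = (if 1 \<le> n then Yf (n - 1) r * Z r else 0)"
proof -
  have "(\<Sum>p\<le>n. \<Sum>q\<le>r. Yf p q * (if n - p = 1 \<and> r - q = 0 then Z q else 0))
      = (\<Sum>p\<le>n. if p = n - 1 \<and> 1 \<le> n then (\<Sum>q\<le>r. if q = r then Yf (n - 1) r * Z r else 0) else 0)"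
  proof (rule sum.cong[OF refl])
    fix p assume p: "p \<in> {..n}"
    show "(\<Sum>q\<le>r. Yf p q * (if n - p = 1 \<and> r - q = 0 then Z q else 0)) =
          (if p = n - 1 \<and> 1 \<le> n then (\<Sum>q\<le>r. if q = r then Yf (n - 1) r * Z r else 0) else 0)"
    proof (cases "p = n - 1 \<and> 1 \<le> n")
      case True
      have "(\<Sum>q\<le>r. Yf p q * (if n - p = 1 \<and> r - q = 0 then Z q else 0)) = (\<Sum>q\<le>r. if q = r then Yf (n - 1) r * Z r else 0)"
      proof (rule sum.cong[OF refl])
        fix q assume "q \<in> {..r}"
        then show "Yf p q * (if n - p = 1 \<and> r - q = 0 then Z q else 0) = (if q = r then Yf (n - 1) r * Z r else 0)"
          using True by auto
      qed
      then show ?thesis using True by simp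
    next
      case False
      then have "n - p \<noteq> 1" using p by auto
      then have "(\<Sum>q\<le>r. Yf p q * (if n - p = 1 \<and> r - q = 0 then Z q else 0)) = 0" by simp
      then show ?thesis by (simp only: if_not_P[OF False])
    qed
  qed
  also have "\<dots> = (if 1 \<le> n then Yf (n - 1) r * Z r else 0)"
    by (simp add: sum.delta)
  finally show ?thesis .
qed

lemma V_xmul: "V n r (ser_mult (ser_letter X) g) z = (if 1 \<le> n then z 0 * V (n - 1) r g z else 0)"
  unfolding prod_formula V_X dsum_delta by simp

lemma V_mulx: "V n r (ser_mult g (ser_letter X)) z = (if 1 \<le> n then V (n - 1) r g z * z r else 0)"
  unfolding prod_formula V_X by (subst dsum_delta2) simp

lemma V_adxy: "V n r (adxy m) z = (if n = Suc m \<and> r = 1 then (z 0 - z 1) ^ m else 0)"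
proof (induction m arbitrary: n r z)
  case 0 then show ?case by (simp add: V_Y)
next
  case (Suc m)
  have "V n r (adxy (Suc m)) z = V n r (ser_mult (ser_letter X) (adxy m)) z - V n r (ser_mult (adxy m) (ser_letter X)) z"
    by (simp add: bracket_def V_diff)
  also have "\<dots> = (if 1 \<le> n then z 0 * V (n - 1) r (adxy m) z - V (n - 1) r (adxy m) z * z r else 0)"
    by (simp add: V_xmul V_mulx)
  also have "\<dots> = (if n = Suc (Suc m) \<and> r = 1 then (z 0 - z 1) ^ Suc m else 0)"
  proof (cases "n = Suc (Suc m) \<and> r = 1")
    case True
    then have "V (n - 1) r (adxy m) z = (z 0 - z 1) ^ m" by (simp add: Suc.IH)
    then show ?thesis using True by (simp add: algebra_simps)
  next
    case False
    then have "V (n - 1) r (adxy m) z = 0" if "1 \<le> n" using that by (auto simp: Suc.IH)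
    then show ?thesis using False by auto
  qed
  finally show ?case .
qed

lemma V_C: "1 \<le> a \<Longrightarrow> V n r (C a) z = (if n = a \<and> r = 1 then (z 0 - z 1) ^ (a - 1) else 0)"
  by (auto simp: C_def V_adxy)

fun D :: "nat list \<Rightarrow> (nat \<Rightarrow> rat) \<Rightarrow> rat" where
  "D [] z = 1"
| "D (a # e) z = (z 0 - z 1) ^ a * D e (\<lambda>i. z (Suc i))"

lemma D_append: "D (e1 @ e2) z = D e1 z * D e2 (\<lambda>i. z (i + length e1))"
  by (induction e1 arbitrary: z) auto

lemma D_prod: "D e z = (\<Prod>i<length e. (z i - z (Suc i)) ^ (e ! i))"
  by (induction e arbitrary: z) (auto simp: prod.lessThan_Suc_shift simp del: prod.lessThan_Suc)

lemma V_one: "V n r ser_one z = (if n = 0 \<and> r = 0 then 1 else 0)"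
proof -
  have "V n r ser_one z = (\<Sum>w\<in>W n r. if w = [] then mon w z else 0)"
    unfolding V_def ser_one_def by (rule sum.cong) auto
  also have "\<dots> = (if n = 0 \<and> r = 0 then 1 else 0)"
    by (simp only: sum.delta[OF W_finite]) (auto simp: W_def)
  finally show ?thesis .
qed

lemma Cprod_simps: "Cprod [] = ser_one" "Cprod (a # as) = ser_mult (C a) (Cprod as)"
  by (auto simp: Cprod_def)

lemma V_Cprod:
  "\<forall>a\<in>set as. 1 \<le> a \<Longrightarrow>
   V n r (Cprod as) z = (if length as = r \<and> sum_list as = n then D (map (\<lambda>a. a - 1) as) z else 0)"
proof (induction as arbitrary: n r z)
  case Nil then show ?case by (auto simp: Cprod_simps V_one)
next
  case (Cons a as)
  have a: "1 \<le> a" using Cons.prems by simp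
  have "V n r (Cprod (a # as)) z
      = (\<Sum>p\<le>n. \<Sum>q\<le>r. (if p = a \<and> q = 1 then (z 0 - z 1) ^ (a - 1) else 0) * V (n - p) (r - q) (Cprod as) (\<lambda>i. z (i + q)))"
    by (simp add: Cprod_simps prod_formula V_C[OF a])
  also have "\<dots> = (if a \<le> n \<and> 1 \<le> r then (z 0 - z 1) ^ (a - 1) * V (n - a) (r - 1) (Cprod as) (\<lambda>i. z (i + 1)) else 0)"
    by (rule dsum_delta)
  also have "\<dots> = (if length (a # as) = r \<and> sum_list (a # as) = n then D (map (\<lambda>a. a - 1) (a # as)) z else 0)"
  proof (cases "a \<le> n \<and> 1 \<le> r")
    case True
    have e1: "(\<lambda>i. z (i + 1)) = (\<lambda>i. z (Suc i))" by simp
    have ih: "V (n - a) (r - 1) (Cprod as) (\<lambda>i. z (i + 1)) =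
      (if length as = r - 1 \<and> sum_list as = n - a then D (map (\<lambda>a. a - 1) as) (\<lambda>i. z (Suc i)) else 0)"
      using Cons.prems by (subst Cons.IH) (auto simp: e1)
    have "(length as = r - 1 \<and> sum_list as = n - a) = (length (a # as) = r \<and> sum_list (a # as) = n)"
      using True by auto
    then show ?thesis using True ih by simp
  next
    case False
    then have c2: "\<not> (length (a # as) = r \<and> sum_list (a # as) = n)" by auto
    show ?thesis by (simp only: if_not_P[OF c2] if_not_P[OF False])
  qed
  finally show ?case .
qed



definition DP :: "nat \<Rightarrow> nat \<Rightarrow> ((nat \<Rightarrow> rat) \<Rightarrow> rat) \<Rightarrow> bool" where
  "DP r d F \<longleftrightarrow> (\<exists>c. \<forall>z. F z = (\<Sum>e\<in>E r d. c e * D e z))"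

lemma DP_zero: "DP r d (\<lambda>z. 0)"
  unfolding DP_def by (rule exI[of _ "\<lambda>_. 0"]) simp

lemma DP_add: "DP r d F \<Longrightarrow> DP r d G \<Longrightarrow> DP r d (\<lambda>z. F z + G z)"
  unfolding DP_def
proof (elim exE)
  fix c1 c2 assume "\<forall>z. F z = (\<Sum>e\<in>E r d. c1 e * D e z)" "\<forall>z. G z = (\<Sum>e\<in>E r d. c2 e * D e z)"
  then show "\<exists>c. \<forall>z. F z + G z = (\<Sum>e\<in>E r d. c e * D e z)"
    by (intro exI[of _ "\<lambda>e. c1 e + c2 e"]) (simp add: sum.distrib algebra_simps)
qed

lemma DP_scale: "DP r d F \<Longrightarrow> DP r d (\<lambda>z. a * F z)"
  unfolding DP_def
proof (elim exE)
  fix c1 assume "\<forall>z. F z = (\<Sum>e\<in>E r d. c1 e * D e z)"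
  then show "\<exists>c. \<forall>z. a * F z = (\<Sum>e\<in>E r d. c e * D e z)"
    by (intro exI[of _ "\<lambda>e. a * c1 e"]) (simp add: sum_distrib_left algebra_simps)
qed

lemma DP_diff: "DP r d F \<Longrightarrow> DP r d G \<Longrightarrow> DP r d (\<lambda>z. F z - G z)"
  using DP_add[of r d F "\<lambda>z. (-1) * G z"] DP_scale[of r d G "-1"] by simp

lemma DP_sum: "finite I \<Longrightarrow> (\<And>i. i \<in> I \<Longrightarrow> DP r d (F i)) \<Longrightarrow> DP r d (\<lambda>z. \<Sum>i\<in>I. F i z)"
proof (induction I rule: finite_induct)
  case empty then show ?case by (simp add: DP_zero)
next
  case (insert x I)
  then show ?case using DP_add[of r d "F x" "\<lambda>z. \<Sum>i\<in>I. F i z"] by simp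
qed

lemma DP_mult:
  assumes "DP q d1 F" "DP s d2 G"
  shows "DP (q + s) (d1 + d2) (\<lambda>z. F z * G (\<lambda>i. z (i + q)))"
proof -
  obtain c1 where c1: "\<And>z. F z = (\<Sum>e\<in>E q d1. c1 e * D e z)" using assms(1) by (auto simp: DP_def)
  obtain c2 where c2: "\<And>z. G z = (\<Sum>e\<in>E s d2. c2 e * D e z)" using assms(2) by (auto simp: DP_def)
  let ?app = "\<lambda>(e1::nat list, e2). e1 @ e2"
  let ?S = "?app ` (E q d1 \<times> E s d2)"
  have inj: "inj_on ?app (E q d1 \<times> E s d2)"
    by (auto simp: inj_on_def E_def)
  have sub: "?S \<subseteq> E (q + s) (d1 + d2)" by (auto simp: E_def)
  define c where "c e = (if e \<in> ?S then c1 (take q e) * c2 (drop q e) else 0)" for e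
  have "F z * G (\<lambda>i. z (i + q)) = (\<Sum>e\<in>E (q + s) (d1 + d2). c e * D e z)" for z
  proof -
    have "F z * G (\<lambda>i. z (i + q)) = (\<Sum>(e1, e2)\<in>E q d1 \<times> E s d2. (c1 e1 * D e1 z) * (c2 e2 * D e2 (\<lambda>i. z (i + q))))"
      by (simp add: c1 c2 sum_product sum.cartesian_product)
    also have "\<dots> = (\<Sum>(e1, e2)\<in>E q d1 \<times> E s d2. c (e1 @ e2) * D (e1 @ e2) z)"
      by (rule sum.cong[OF refl]) (auto simp: c_def D_append E_def)
    also have "\<dots> = (\<Sum>e\<in>?S. c e * D e z)"
      by (subst sum.reindex[OF inj]) (simp add: case_prod_unfold)
    also have "\<dots> = (\<Sum>e\<in>E (q + s) (d1 + d2). c e * D e z)"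
      by (rule sum.mono_neutral_left[OF E_finite sub]) (auto simp: c_def)
    finally show ?thesis .
  qed
  then show ?thesis unfolding DP_def by blast
qed

lemma DP_pow: "DP 1 m (\<lambda>z. (z 0 - z 1) ^ m)"
proof -
  have "E 1 m = {[m]}" by (auto simp: E_def length_Suc_conv)
  then show ?thesis unfolding DP_def
    by (intro exI[of _ "\<lambda>e. 1"]) simp
qed

definition goodS :: "series \<Rightarrow> bool" where
  "goodS f \<longleftrightarrow> (\<forall>n r. DP r (n - r) (V n r f))"

lemma goodS_mult:
  assumes f: "goodS f" and g: "goodS g"
  shows "goodS (ser_mult f g)"
  unfolding goodS_def
proof (intro allI)
  fix n r
  have f': "\<And>n r. DP r (n - r) (V n r f)" and g': "\<And>n r. DP r (n - r) (V n r g)"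
    using f g by (auto simp: goodS_def)
  have eq: "V n r (ser_mult f g) = (\<lambda>z. \<Sum>p\<le>n. \<Sum>q\<le>r. V p q f z * V (n - p) (r - q) g (\<lambda>i. z (i + q)))"
    by (rule ext) (rule prod_formula)
  show "DP r (n - r) (V n r (ser_mult f g))"
    unfolding eq
  proof (intro DP_sum, simp, simp)
    fix p q assume p: "p \<in> {..n}" and q: "q \<in> {..r}"
    show "DP r (n - r) (\<lambda>z. V p q f z * V (n - p) (r - q) g (\<lambda>i. z (i + q)))"
    proof (cases "q \<le> p \<and> r - q \<le> n - p")
      case True
      have "DP (q + (r - q)) ((p - q) + ((n - p) - (r - q))) (\<lambda>z. V p q f z * V (n - p) (r - q) g (\<lambda>i. z (i + q)))"
        by (rule DP_mult[OF f' g'])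
      moreover have "q + (r - q) = r" "(p - q) + ((n - p) - (r - q)) = n - r"
        using True p q by auto
      ultimately show ?thesis by simp
    next
      case False
      then have "(\<lambda>z. V p q f z * V (n - p) (r - q) g (\<lambda>i. z (i + q))) = (\<lambda>z. 0)"
        by (auto simp: V_empty)
      then show ?thesis by (simp add: DP_zero)
    qed
  qed
qed

lemma V_funs:
  "V n r (\<lambda>w. f w + g w) = (\<lambda>z. V n r f z + V n r g z)"
  "V n r (\<lambda>w. f w - g w) = (\<lambda>z. V n r f z - V n r g z)"
  "V n r (\<lambda>w. c * f w) = (\<lambda>z. c * V n r f z)"
  by (auto simp: V_add V_diff V_scale)

lemma lie_poly_good: "a \<in> lie_poly \<Longrightarrow> goodS a"
proof (induction rule: lie_poly.induct)
  case (gen i)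
  show ?case unfolding goodS_def
  proof (intro allI)
    fix n r
    show "DP r (n - r) (V n r (C i))"
    proof (cases "n = i \<and> r = 1")
      case True
      then have "V n r (C i) = (\<lambda>z. (z 0 - z 1) ^ (n - r))"
        using gen by (auto simp: V_C)
      then show ?thesis using True DP_pow[of "i - 1"] by simp
    next
      case False
      then have "V n r (C i) = (\<lambda>z. 0)" using gen by (auto simp: V_C)
      then show ?thesis by (simp add: DP_zero)
    qed
  qed
next
  case zero
  have "V n r (\<lambda>a. 0) = (\<lambda>z. 0)" for n r by (rule ext) (simp add: V_def)
  then show ?case by (simp add: goodS_def ser_zero_def DP_zero)
next
  case (add a b)
  then show ?case
    by (auto simp: goodS_def ser_add_def V_funs intro: DP_add)
next
  case (scale a c)
  then show ?case
    by (auto simp: goodS_def ser_scale_def V_funs intro: DP_scale)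
next
  case (brk a b)
  have "goodS (ser_mult a b)" "goodS (ser_mult b a)" using brk goodS_mult by auto
  then show ?case
    by (auto simp: goodS_def bracket_def V_funs intro: DP_diff)
qed



lemma len_le_sum: "\<forall>a\<in>set as. 1 \<le> a \<Longrightarrow> length as \<le> sum_list as"
  by (induction as) auto

lemma sum_map_Suc: "sum_list (map Suc e) = sum_list e + length e"
  by (induction e) auto

lemma map_Suc_pred: "\<forall>a\<in>set as. 1 \<le> a \<Longrightarrow> map Suc (map (\<lambda>a. a - 1) as) = as"
  by (induction as) auto

lemma comp_finite: "finite (compositions n)"
proof (rule finite_subset)
  show "compositions n \<subseteq> {xs. set xs \<subseteq> {..n} \<and> length xs \<le> n}"
    by (auto simp: compositions_def member_le_sum_list len_le_sum)
  show "finite {xs. set xs \<subseteq> {..n} \<and> length xs \<le> n}"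
    by (rule finite_lists_length_le) simp
qed

lemma comp_reindex:
  assumes "r \<le> n"
  shows "(\<Sum>as\<in>{as \<in> compositions n. length as = r}. F as) = (\<Sum>e\<in>E r (n - r). F (map Suc e))"
proof -
  have inj: "inj_on (map Suc) (E r (n - r))" by (auto simp: inj_on_def)
  have img: "map Suc ` E r (n - r) = {as \<in> compositions n. length as = r}"
  proof
    show "map Suc ` E r (n - r) \<subseteq> {as \<in> compositions n. length as = r}"
      using assms by (auto simp: E_def compositions_def sum_map_Suc)
    show "{as \<in> compositions n. length as = r} \<subseteq> map Suc ` E r (n - r)"
    proof
      fix as assume as: "as \<in> {as \<in> compositions n. length as = r}"
      have eq: "as = map Suc (map (\<lambda>a. a - 1) as)"
        using as map_Suc_pred[of as] by (simp add: compositions_def)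
      have "sum_list (map Suc (map (\<lambda>a. a - 1) as)) = n" using as eq by (simp add: compositions_def)
      then have "map (\<lambda>a. a - 1) as \<in> E r (n - r)"
        using as by (simp add: E_def sum_map_Suc del: map_map)
      then show "as \<in> map Suc ` E r (n - r)" using eq by blast
    qed
  qed
  show ?thesis
    by (subst img[symmetric], subst sum.reindex[OF inj]) simp
qed

lemma comp_empty: "n < r \<Longrightarrow> {as \<in> compositions n. length as = r} = {}"
  using len_le_sum by (fastforce simp: compositions_def)

lemma V_soc:
  "V n r (series_of_coeffs k) z = (if r \<le> n then (\<Sum>e\<in>E r (n - r). k (map Suc e) * D e z) else 0)"
proof -
  have "V n r (series_of_coeffs k) z = (\<Sum>w\<in>W n r. \<Sum>as\<in>compositions n. k as * Cprod as w * mon w z)"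
    unfolding V_def series_of_coeffs_def
    by (rule sum.cong[OF refl]) (auto simp: W_def sum_distrib_right)
  also have "\<dots> = (\<Sum>as\<in>compositions n. k as * V n r (Cprod as) z)"
    by (subst sum.swap) (simp add: V_def sum_distrib_left algebra_simps)
  also have "\<dots> = (\<Sum>as\<in>compositions n. if length as = r then k as * D (map (\<lambda>a. a - 1) as) z else 0)"
  proof (rule sum.cong[OF refl])
    fix as assume "as \<in> compositions n"
    then show "k as * V n r (Cprod as) z = (if length as = r then k as * D (map (\<lambda>a. a - 1) as) z else 0)"
      by (simp add: compositions_def V_Cprod)
  qed
  also have "\<dots> = (\<Sum>as\<in>{as \<in> compositions n. length as = r}. k as * D (map (\<lambda>a. a - 1) as) z)"
    by (rule sum.inter_filter[OF comp_finite, symmetric])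
  also have "\<dots> = (if r \<le> n then (\<Sum>e\<in>E r (n - r). k (map Suc e) * D e z) else 0)"
  proof (cases "r \<le> n")
    case True
    show ?thesis
      using comp_reindex[OF True, of "\<lambda>as. k as * D (map (\<lambda>a. a - 1) as) z"] True
      by (simp add: comp_def)
  next
    case False
    then have e: "{as \<in> compositions n. length as = r} = {}" by (intro comp_empty) simp
    show ?thesis unfolding e using False by simp
  qed
  finally show ?thesis .
qed

lemma LD:
  assumes "\<forall>z. (\<Sum>e\<in>E r d. c e * D e z) = 0" and "e \<in> E r d"
  shows "c e = 0"
proof (rule L[OF _ assms(2)], intro allI impI)
  fix u :: "rat list" assume u: "length u = r"
  define z where "z i = sum_list (drop i u)" for i
  have zd: "z i - z (Suc i) = u ! i" if "i < r" for i
    using that u by (simp add: z_def Cons_nth_drop_Suc[symmetric])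
  have "(\<Sum>e\<in>E r d. c e * (\<Prod>i<r. (u ! i) ^ (e ! i))) = (\<Sum>e\<in>E r d. c e * D e z)"
    by (rule sum.cong[OF refl]) (auto simp: D_prod E_def zd)
  then show "(\<Sum>e\<in>E r d. c e * (\<Prod>i<r. (u ! i) ^ (e ! i))) = 0" using assms(1) by simp
qed

lemma soc_unique:
  assumes "valid_coeffs k1" "valid_coeffs k2" "series_of_coeffs k1 = series_of_coeffs k2"
  shows "k1 = k2"
proof
  fix as
  show "k1 as = k2 as"
  proof (cases "\<exists>a\<in>set as. a = 0")
    case True then show ?thesis using assms(1,2) by (simp add: valid_coeffs_def)
  next
    case False
    define e where "e = map (\<lambda>a. a - 1) as"
    have "\<forall>a\<in>set as. 1 \<le> a" using False by (metis Suc_leI neq0_conv One_nat_def)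
    then have as: "as = map Suc e" using map_Suc_pred[of as] by (simp add: e_def)
    define n where "n = sum_list as"
    define r where "r = length as"
    have rn: "r \<le> n" by (simp add: r_def n_def as sum_map_Suc)
    have eE: "e \<in> E r (n - r)" by (simp add: E_def r_def n_def as sum_map_Suc)
    have "\<forall>z. (\<Sum>e\<in>E r (n - r). (k1 (map Suc e) - k2 (map Suc e)) * D e z) = 0"
    proof
      fix z
      have "V n r (series_of_coeffs k1) z = V n r (series_of_coeffs k2) z" using assms(3) by simp
      then show "(\<Sum>e\<in>E r (n - r). (k1 (map Suc e) - k2 (map Suc e)) * D e z) = 0"
        using rn by (simp add: V_soc algebra_simps sum_subtractf)
    qed
    from LD[OF this eE] show ?thesis by (simp add: as)
  qed
qed

lemma soc_exists:
  assumes "goodS f"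
  shows "\<exists>k. valid_coeffs k \<and> series_of_coeffs k = f"
proof -
  have "\<forall>n r. \<exists>c. \<forall>z. V n r f z = (\<Sum>e\<in>E r (n - r). c e * D e z)"
    using assms by (auto simp: goodS_def DP_def)
  then obtain cc where cc: "\<And>n r z. V n r f z = (\<Sum>e\<in>E r (n - r). cc n r e * D e z)"
    by metis
  define k where "k as = (if \<forall>a\<in>set as. 1 \<le> a then cc (sum_list as) (length as) (map (\<lambda>a. a - 1) as) else 0)" for as
  have valid: "valid_coeffs k" by (auto simp: valid_coeffs_def k_def)
  have "series_of_coeffs k = f"
  proof (rule series_eqI)
    fix n r z
    show "V n r (series_of_coeffs k) z = V n r f z"
    proof (cases "r \<le> n")
      case True
      have "V n r (series_of_coeffs k) z = (\<Sum>e\<in>E r (n - r). k (map Suc e) * D e z)"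
        using True by (simp add: V_soc)
      also have "\<dots> = (\<Sum>e\<in>E r (n - r). cc n r e * D e z)"
        by (rule sum.cong[OF refl]) (use True in \<open>auto simp: k_def E_def sum_map_Suc comp_def\<close>)
      also have "\<dots> = V n r f z" by (simp add: cc)
      finally show ?thesis .
    next
      case False then show ?thesis by (simp add: V_soc V_empty)
    qed
  qed
  then show ?thesis using valid by blast
qed

lemma lie_C_good:
  assumes "b \<in> lie_C" shows "goodS b"
proof -
  have "V n r b = V n r (hom n b)" for n r
    by (rule ext) (auto simp: V_def hom_def W_def intro!: sum.cong)
  then show ?thesis using assms lie_poly_good by (auto simp: lie_C_def goodS_def)
qed

lemma C_coeffs_props:
  assumes "b \<in> lie_C"
  shows "valid_coeffs (C_coeffs b) \<and> series_of_coeffs (C_coeffs b) = b"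
proof -
  have ex1: "\<exists>!k. valid_coeffs k \<and> series_of_coeffs k = b"
    using soc_exists[OF lie_C_good[OF assms]] soc_unique by blast
  show ?thesis unfolding C_coeffs_def by (rule theI'[OF ex1])
qed



definition dfs :: "nat \<Rightarrow> (nat \<Rightarrow> rat) \<Rightarrow> rat list" where
  "dfs r z = map (\<lambda>i. z i - z (Suc i)) [0..<r]"

lemma dfs_len[simp]: "length (dfs r z) = r"
  by (simp add: dfs_def)

lemma dfs_nth: "i < r \<Longrightarrow> dfs r z ! i = z i - z (Suc i)"
  by (simp add: dfs_def)

lemma dfs_surj: "length u = r \<Longrightarrow> dfs r (\<lambda>i. sum_list (drop i u)) = u"
  by (rule nth_equalityI) (auto simp: dfs_nth Cons_nth_drop_Suc[symmetric])

lemma sum_dfs: "sum_list (dfs r z) = z 0 - z r"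
  by (induction r) (auto simp: dfs_def)

lemma dfs_rot:
  assumes "1 \<le> r"
  shows "dfs r (rotz r z) = tl (dfs r z) @ [- sum_list (dfs r z)]"
proof (rule nth_equalityI)
  show "length (dfs r (rotz r z)) = length (tl (dfs r z) @ [- sum_list (dfs r z)])"
    using assms by simp
next
  fix i assume "i < length (dfs r (rotz r z))"
  then have i: "i < r" by simp
  show "dfs r (rotz r z) ! i = (tl (dfs r z) @ [- sum_list (dfs r z)]) ! i"
  proof (cases "i < r - 1")
    case True
    then have "Suc i < r" by simp
    then show ?thesis using i True by (simp add: dfs_nth nth_append nth_tl rotz_def)
  next
    case False
    then have "i = r - 1" using i by simp
    then show ?thesis using assms by (simp add: dfs_nth nth_append rotz_def sum_dfs)
  qed
qed

lemma hom_eval_ma: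
  "hom_eval (ma b) r d u = (\<Sum>e\<in>E r d. C_coeffs b (map Suc e) * (\<Prod>i<r. (u ! i) ^ (e ! i)))"
  unfolding hom_eval_def E_def[symmetric]
  by (rule sum.cong[OF refl]) (simp add: ma_def E_def)

lemma VB:
  assumes "b \<in> lie_C" "r \<le> n"
  shows "V n r b z = hom_eval (ma b) r (n - r) (dfs r z)"
proof -
  have b: "series_of_coeffs (C_coeffs b) = b" using C_coeffs_props[OF assms(1)] by simp
  have "V n r b z = (\<Sum>e\<in>E r (n - r). C_coeffs b (map Suc e) * D e z)"
    using V_soc[of n r "C_coeffs b" z] assms(2) by (simp add: b)
  also have "\<dots> = hom_eval (ma b) r (n - r) (dfs r z)"
    unfolding hom_eval_ma
    by (rule sum.cong[OF refl]) (auto simp: E_def D_prod dfs_nth)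
  finally show ?thesis .
qed

lemma rot_inv1:
  fixes u :: "rat list"
  assumes "u \<noteq> []"
  shows "tl ((- sum_list u) # butlast u) @ [- sum_list ((- sum_list u) # butlast u)] = u"
proof -
  have ue: "butlast u @ [last u] = u" using assms by simp
  have "sum_list (butlast u @ [last u]) = sum_list (butlast u) + last u" by simp
  then have S: "sum_list u = sum_list (butlast u) + last u" using ue by simp
  have "- sum_list ((- sum_list u) # butlast u) = last u" using S by simp
  then show ?thesis using ue by simp
qed

lemma rot_inv2:
  fixes u :: "rat list"
  assumes "u \<noteq> []"
  shows "(- sum_list (tl u @ [- sum_list u])) # butlast (tl u @ [- sum_list u]) = u"
proof -
  have "sum_list u = hd u + sum_list (tl u)"
    using assms by (cases u) auto
  then have "- sum_list (tl u @ [- sum_list u]) = hd u" by (simp add: algebra_simps)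
  then show ?thesis using assms by simp
qed

theorem proposition12:
  assumes "b \<in> lie_C"
  shows "push_ser b = b \<longleftrightarrow> push_invariant_mould (ma b)"
proof
  assume P: "push_ser b = b"
  show "push_invariant_mould (ma b)"
    unfolding push_invariant_mould_def
  proof (intro allI impI)
    fix r d and u :: "rat list"
    assume r: "1 \<le> r" and u: "length u = r"
    let ?H = "hom_eval (ma b) r d"
    have inv: "?H (dfs r (rotz r z)) = ?H (dfs r z)" for z
    proof -
      have "V (d + r) r b (rotz r z) = V (d + r) r b z"
        using V_push[of "d + r" r b z] P by simp
      then show ?thesis using VB[OF assms, of r "d + r"] by simp
    qed
    define v where "v = (- sum_list u) # butlast u"
    have lv: "length v = r" using u r by (simp add: v_def)
    define z where "z i = sum_list (drop i v)" for i
    have dz: "dfs r z = v" unfolding z_def using lv by (rule dfs_surj)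
    have une: "u \<noteq> []" using r u by auto
    have "dfs r (rotz r z) = tl v @ [- sum_list v]"
      using r by (simp add: dfs_rot dz)
    also have "\<dots> = u" unfolding v_def by (rule rot_inv1[OF une])
    finally have "dfs r (rotz r z) = u" .
    with inv[of z] dz show "?H ((- sum_list u) # butlast u) = ?H u" by (simp add: v_def)
  qed
next
  assume M: "push_invariant_mould (ma b)"
  show "push_ser b = b"
  proof (rule series_eqI)
    fix n r z
    have "V n r (push_ser b) z = V n r b (rotz r z)" by (rule V_push)
    also have "\<dots> = V n r b z"
    proof (cases "r = 0")
      case True
      have "rotz 0 z = z" by (auto simp: rotz_def)
      then show ?thesis using True by simp
    next
      case r0: False
      show ?thesis
      proof (cases "r \<le> n")
        case False then show ?thesis by (simp add: V_empty)
      next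
        case True
        let ?H = "hom_eval (ma b) r (n - r)"
        define u where "u = dfs r z"
        define v where "v = tl u @ [- sum_list u]"
        have ne: "u \<noteq> []" using r0 unfolding u_def by (metis dfs_len length_0_conv)
        have lv: "length v = r" using r0 by (simp add: v_def u_def)
        have "?H ((- sum_list v) # butlast v) = ?H v"
          using M r0 lv by (simp add: push_invariant_mould_def)
        then have "?H u = ?H v" using rot_inv2[OF ne] by (simp add: v_def)
        moreover have "dfs r (rotz r z) = v"
          using r0 by (simp add: dfs_rot v_def u_def)
        ultimately show ?thesis
          using VB[OF assms True, of z] VB[OF assms True, of "rotz r z"] by (simp add: u_def)
      qed
    qed
    finally show "V n r (push_ser b) z = V n r b z" .
  qed
qed


end
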